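(* Let $\mathbb{F}_0=(F_0,\lambda_0F_0,\frac{\lambda_0}{1-\lambda_0})\in\mathcal{M}_+$ with $\lambda_0\in(0,1)$ and $\int F_0\,dv>0$, and let $\delta>0$. Then there exists $\varepsilon>0$ such that every $\mathbb{F}\in\mathcal{X}$ with $\mathbb{F}>0$ and $\|\mathbb{F}-\mathbb{F}_0\|_{\mathcal{X}}<\varepsilon$ can be written as $\mathbb{F}=\bar{\mathbb{F}}+W$ where $\bar{\mathbb{F}}=(\bar F,\bar\lambda\bar F,\frac{\bar\lambda}{1-\bar\lambda})\in\mathcal{M}$ with $\bar\lambda\in(0,1)$, and $W=(\alpha,-\alpha,\theta)\in\mathcal{X}$ with $\int_{\mathbb{R}^3}\alpha\,dv=\int_{\mathbb{S}^2}\theta\,dn$ and $\|W\|_{\mathcal{X}}<\delta$; this decomposition is unique among decompositions with $(\bar F,\alpha,\theta,\bar\lambda)$ in a neighborhood of $(F_0,0,0,\lambda_0)$. Moreover $\bar F>0$ a.e., so $\bar{\mathbb{F}}\in\mathcal{M}_+$.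
   Context: $L^1_k(\mathbb{R}^3)$ has norm $\int|f|(1+|v|^2)^{k/2}dv$; $\mathbb{S}^2$ carries a surface measure normalized to total mass $1$. $\mathcal{X}=L^1_2(\mathbb{R}^3)\times L^1_2(\mathbb{R}^3)\times L^1(\mathbb{S}^2)$ with norm $\|(F^1,F^2,Q)\|_{\mathcal{X}}=\|F^1\|_{L^1_2}+\|F^2\|_{L^1_2}+\|Q\|_{L^1(\mathbb{S}^2)}$; $\mathbb{F}>0$ means each component is positive a.e. Manifold of steady states: $\mathcal{M}=\{(F,\lambda F,\frac{\lambda}{1-\lambda}):F\in L^1_2(\mathbb{R}^3),\lambda<1\}$ (the third component being a constant function on $\mathbb{S}^2$), and $\mathcal{M}_+=\{(F,\lambda F,\frac{\lambda}{1-\lambda})\in\mathcal{M}:F\ge0,\lambda\in[0,1)\}$. *)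

theory Defs
  imports "HOL-Analysis.Analysis"
begin

type_synonym vel = "real^3"

text \<open>Normalized surface measure on the unit sphere S^2 in R^3: the push-forward of the
  normalized Lebesgue measure on the punctured unit ball under radial projection
  (normalized cone measure, which equals the rotation-invariant surface probability measure).\<close>
definition sphere_measure :: "vel measure" where
  "sphere_measure = distr (uniform_measure lborel (ball 0 1 - {0}))
                          (restrict_space borel (sphere 0 1)) (\<lambda>x. x /\<^sub>R norm x)"

definition L12 :: "(vel \<Rightarrow> real) \<Rightarrow> bool" where
  "L12 f \<longleftrightarrow> f \<in> borel_measurable lborel \<and> integrable lborel (\<lambda>v. f v * (1 + (norm v)^2))"

definition normL12 :: "(vel \<Rightarrow> real) \<Rightarrow> real" where
  "normL12 f = (LINT v|lborel. \<bar>f v\<bar> * (1 + (norm v)^2))"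

definition L1S :: "(vel \<Rightarrow> real) \<Rightarrow> bool" where
  "L1S q \<longleftrightarrow> q \<in> borel_measurable sphere_measure \<and> integrable sphere_measure q"

definition normS :: "(vel \<Rightarrow> real) \<Rightarrow> real" where
  "normS q = (LINT n|sphere_measure. \<bar>q n\<bar>)"

definition inX :: "(vel \<Rightarrow> real) \<Rightarrow> (vel \<Rightarrow> real) \<Rightarrow> (vel \<Rightarrow> real) \<Rightarrow> bool" where
  "inX F1 F2 Q \<longleftrightarrow> L12 F1 \<and> L12 F2 \<and> L1S Q"

definition normX :: "(vel \<Rightarrow> real) \<Rightarrow> (vel \<Rightarrow> real) \<Rightarrow> (vel \<Rightarrow> real) \<Rightarrow> real" where
  "normX F1 F2 Q = normL12 F1 + normL12 F2 + normS Q"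

definition posX :: "(vel \<Rightarrow> real) \<Rightarrow> (vel \<Rightarrow> real) \<Rightarrow> (vel \<Rightarrow> real) \<Rightarrow> bool" where
  "posX F1 F2 Q \<longleftrightarrow> (AE v in lborel. F1 v > 0) \<and> (AE v in lborel. F2 v > 0)
                     \<and> (AE n in sphere_measure. Q n > 0)"

definition is_decomp :: "(vel \<Rightarrow> real) \<Rightarrow> (vel \<Rightarrow> real) \<Rightarrow> (vel \<Rightarrow> real) \<Rightarrow>
    (vel \<Rightarrow> real) \<Rightarrow> real \<Rightarrow> (vel \<Rightarrow> real) \<Rightarrow> (vel \<Rightarrow> real) \<Rightarrow> bool" where
  "is_decomp F1 F2 Q Fb lb \<alpha> \<theta> \<longleftrightarrow>
     L12 Fb \<and> lb < 1 \<and> L12 \<alpha> \<and> L1S \<theta> \<and>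
     (AE v in lborel. F1 v = Fb v + \<alpha> v) \<and>
     (AE v in lborel. F2 v = lb * Fb v - \<alpha> v) \<and>
     (AE n in sphere_measure. Q n = lb / (1 - lb) + \<theta> n) \<and>
     (LINT v|lborel. \<alpha> v) = (LINT n|sphere_measure. \<theta> n)"

definition nbhd_dist :: "(vel \<Rightarrow> real) \<Rightarrow> real \<Rightarrow> (vel \<Rightarrow> real) \<Rightarrow> real \<Rightarrow>
    (vel \<Rightarrow> real) \<Rightarrow> (vel \<Rightarrow> real) \<Rightarrow> real" where
  "nbhd_dist F0 lam0 Fb lb \<alpha> \<theta> =
     normL12 (\<lambda>v. Fb v - F0 v) + normL12 \<alpha> + normS \<theta> + \<bar>lb - lam0\<bar>"

end

theory Submission
  imports Defs
begin


lemma w_pos: "(1::real) + (norm (v::vel))^2 > 0"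
  by (simp add: add_pos_nonneg)

lemma L12_meas: "L12 f \<Longrightarrow> f \<in> borel_measurable lborel"
  by (simp add: L12_def)

lemma L12_absw: "L12 f \<Longrightarrow> integrable lborel (\<lambda>v. \<bar>f v\<bar> * (1 + (norm v)^2))"
proof -
  assume "L12 f"
  then have "integrable lborel (\<lambda>v. \<bar>f v * (1 + (norm v)^2)\<bar>)"
    unfolding L12_def by (intro integrable_abs) auto
  moreover have "\<And>v::vel. \<bar>f v * (1 + (norm v)^2)\<bar> = \<bar>f v\<bar> * (1 + (norm v)^2)"
    using w_pos by (simp add: abs_mult)
  ultimately show ?thesis by simp
qed

lemma L12_int: "L12 f \<Longrightarrow> integrable lborel f"
proof -
  assume f: "L12 f"
  show ?thesis
  proof (rule Bochner_Integration.integrable_bound[where f="\<lambda>v. f v * (1 + (norm v)^2)"])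
    show "integrable lborel (\<lambda>v. f v * (1 + (norm v)^2))" using f by (simp add: L12_def)
    show "f \<in> borel_measurable lborel" using f by (simp add: L12_def)
    show "AE v in lborel. norm (f v) \<le> norm (f v * (1 + (norm v)^2))"
    proof (rule AE_I2)
      fix v :: vel
      have "\<bar>f v\<bar> * 1 \<le> \<bar>f v\<bar> * (1 + (norm v)^2)" by (intro mult_left_mono) auto
      then show "norm (f v) \<le> norm (f v * (1 + (norm v)^2))"
        using w_pos[of v] by (simp add: abs_mult)
    qed
  qed
qed

lemma normL12_nonneg: "normL12 f \<ge> 0"
  unfolding normL12_def by (intro integral_nonneg_AE) auto

lemma abs_int_le_normL12: "L12 f \<Longrightarrow> \<bar>LINT v|lborel. f v\<bar> \<le> normL12 f"
  unfolding normL12_def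
proof (rule integral_abs_bound_integral)
  assume "L12 f"
  then show "integrable lborel f" "integrable lborel (\<lambda>v. \<bar>f v\<bar> * (1 + (norm v)^2))"
    by (auto intro: L12_int L12_absw)
  fix v :: vel
  have "\<bar>f v\<bar> * 1 \<le> \<bar>f v\<bar> * (1 + (norm v)^2)" by (intro mult_left_mono) auto
  then show "\<bar>f v\<bar> \<le> \<bar>f v\<bar> * (1 + (norm v)^2)" by simp
qed

lemma L12_lin3:
  assumes "L12 f" "L12 g" "L12 k" "\<And>v. h v = a * f v + b * g v + c * k v"
  shows "L12 h" "normL12 h \<le> \<bar>a\<bar> * normL12 f + \<bar>b\<bar> * normL12 g + \<bar>c\<bar> * normL12 k"
proof -
  have hh: "h = (\<lambda>v. a * f v + b * g v + c * k v)" using assms(4) by auto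
  note [measurable] = L12_meas[OF assms(1)] L12_meas[OF assms(2)] L12_meas[OF assms(3)]
  have i: "integrable lborel (\<lambda>v. a * (f v * (1 + (norm v)^2)) + b * (g v * (1 + (norm v)^2))
         + c * (k v * (1 + (norm v)^2)))"
    using assms(1-3) unfolding L12_def by auto
  show L: "L12 h" unfolding L12_def hh
  proof
    show "(\<lambda>v. a * f v + b * g v + c * k v) \<in> borel_measurable lborel" by measurable
    show "integrable lborel (\<lambda>v. (a * f v + b * g v + c * k v) * (1 + (norm v)^2))"
      using i by (simp add: algebra_simps)
  qed
  have ia: "integrable lborel (\<lambda>v. \<bar>a\<bar> * (\<bar>f v\<bar> * (1 + (norm v)^2)) + \<bar>b\<bar> * (\<bar>g v\<bar> * (1 + (norm v)^2))
         + \<bar>c\<bar> * (\<bar>k v\<bar> * (1 + (norm v)^2)))"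
    using L12_absw[OF assms(1)] L12_absw[OF assms(2)] L12_absw[OF assms(3)] by auto
  have "normL12 h \<le> (LINT v|lborel. \<bar>a\<bar> * (\<bar>f v\<bar> * (1 + (norm v)^2)) + \<bar>b\<bar> * (\<bar>g v\<bar> * (1 + (norm v)^2))
         + \<bar>c\<bar> * (\<bar>k v\<bar> * (1 + (norm v)^2)))"
    unfolding normL12_def
  proof (rule integral_mono)
    show "integrable lborel (\<lambda>v. \<bar>h v\<bar> * (1 + (norm v)^2))" using L by (rule L12_absw)
    show "integrable lborel (\<lambda>v. \<bar>a\<bar> * (\<bar>f v\<bar> * (1 + (norm v)^2)) + \<bar>b\<bar> * (\<bar>g v\<bar> * (1 + (norm v)^2))
         + \<bar>c\<bar> * (\<bar>k v\<bar> * (1 + (norm v)^2)))" by (rule ia)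
    fix v :: vel
    have "\<bar>h v\<bar> \<le> \<bar>a\<bar> * \<bar>f v\<bar> + \<bar>b\<bar> * \<bar>g v\<bar> + \<bar>c\<bar> * \<bar>k v\<bar>"
    proof -
      have "\<bar>a*f v + b*g v + c*k v\<bar> \<le> \<bar>a*f v\<bar> + \<bar>b*g v\<bar> + \<bar>c*k v\<bar>"
        using abs_triangle_ineq[of "a*f v + b*g v" "c*k v"] abs_triangle_ineq[of "a*f v" "b*g v"]
        by linarith
      then show ?thesis unfolding hh by (simp add: abs_mult)
    qed
    then have "\<bar>h v\<bar> * (1 + (norm v)^2) \<le> (\<bar>a\<bar> * \<bar>f v\<bar> + \<bar>b\<bar> * \<bar>g v\<bar> + \<bar>c\<bar> * \<bar>k v\<bar>) * (1 + (norm v)^2)"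
      using w_pos[of v] by (intro mult_right_mono) auto
    then show "\<bar>h v\<bar> * (1 + (norm v)^2) \<le> \<bar>a\<bar> * (\<bar>f v\<bar> * (1 + (norm v)^2)) + \<bar>b\<bar> * (\<bar>g v\<bar> * (1 + (norm v)^2))
         + \<bar>c\<bar> * (\<bar>k v\<bar> * (1 + (norm v)^2))" by (simp add: algebra_simps)
  qed
  also have "\<dots> = \<bar>a\<bar> * normL12 f + \<bar>b\<bar> * normL12 g + \<bar>c\<bar> * normL12 k"
    unfolding normL12_def
    using L12_absw[OF assms(1)] L12_absw[OF assms(2)] L12_absw[OF assms(3)] by simp
  finally show "normL12 h \<le> \<bar>a\<bar> * normL12 f + \<bar>b\<bar> * normL12 g + \<bar>c\<bar> * normL12 k" .
qed

lemma L12_zero: "L12 (\<lambda>v. 0)"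
  unfolding L12_def by simp

lemma L12_lin2:
  assumes "L12 f" "L12 g" "\<And>v. h v = a * f v + b * g v"
  shows "L12 h" "normL12 h \<le> \<bar>a\<bar> * normL12 f + \<bar>b\<bar> * normL12 g"
  using L12_lin3[OF assms(1,2) L12_zero, of h a b 0] assms(3) by auto


lemma sphere_emeasure:
  assumes A: "A \<in> sets (restrict_space borel (sphere (0::vel) 1))"
  shows "emeasure sphere_measure A =
     emeasure (uniform_measure lborel (ball 0 1 - {0})) ((\<lambda>x::vel. x /\<^sub>R norm x) -` A)"
proof -
  let ?M = "uniform_measure lborel (ball (0::vel) 1 - {0})"
  let ?f = "\<lambda>x::vel. x /\<^sub>R norm x"
  let ?N = "restrict_space borel (sphere (0::vel) 1)"
  have sph: "sphere (0::vel) 1 \<in> sets borel" by (intro borel_closed closed_sphere)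
  have sN: "\<And>B. B \<in> sets ?N \<Longrightarrow> B \<in> sets borel"
    using sets_restrict_space_iff[of "sphere (0::vel) 1" borel] sph by simp
  have fm: "?f \<in> borel_measurable borel" by measurable
  have pre: "\<And>B. B \<in> sets ?N \<Longrightarrow> ?f -` B \<in> sets ?M"
  proof -
    fix B assume "B \<in> sets ?N"
    then have "B \<in> sets borel" by (rule sN)
    then have "?f -` B \<inter> space borel \<in> sets borel" using fm measurable_sets by blast
    then show "?f -` B \<in> sets ?M" by simp
  qed
  show ?thesis
    unfolding sphere_measure_def distr_def
  proof (subst emeasure_measure_of_sigma)
    show "positive (sets ?N) (\<lambda>A. emeasure ?M (?f -` A \<inter> space ?M))"
      by (auto simp: positive_def)
    show "countably_additive (sets ?N) (\<lambda>A. emeasure ?M (?f -` A \<inter> space ?M))"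
    proof (intro countably_additiveI)
      fix A :: "nat \<Rightarrow> vel set" assume "range A \<subseteq> sets ?N" "disjoint_family A"
      then have A: "\<And>i. A i \<in> sets ?N" by auto
      have *: "range (\<lambda>i. ?f -` (A i) \<inter> space ?M) \<subseteq> sets ?M"
        using pre A by auto
      have **: "disjoint_family (\<lambda>i. ?f -` A i \<inter> space ?M)"
        using \<open>disjoint_family A\<close> by (auto simp: disjoint_family_on_def)
      show "(\<Sum>i. emeasure ?M (?f -` A i \<inter> space ?M)) = emeasure ?M (?f -` (\<Union>i. A i) \<inter> space ?M)"
        using suminf_emeasure[OF * **] by (simp add: vimage_UN)
    qed
    show "sigma_algebra (space ?N) (sets ?N)" by (rule sets.sigma_algebra_axioms)
    show "A \<in> sets ?N" by fact
  qed simp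
qed

lemma sphere_one: "emeasure sphere_measure (space sphere_measure) = 1"
proof -
  let ?f = "\<lambda>x::vel. x /\<^sub>R norm x"
  have sp: "space sphere_measure = sphere 0 1" by (simp add: sphere_measure_def)
  have "sphere (0::vel) 1 \<in> sets (restrict_space borel (sphere (0::vel) 1))"
    using sets_restrict_space_iff[of "sphere (0::vel) 1" borel] borel_closed[OF closed_sphere[of "0::vel" 1]] by simp
  then have "emeasure sphere_measure (sphere 0 1) =
     emeasure (uniform_measure lborel (ball 0 1 - {0})) (?f -` sphere 0 1)"
    by (rule sphere_emeasure)
  also have "?f -` sphere 0 1 = UNIV - {0}" by auto
  also have "emeasure (uniform_measure lborel (ball (0::vel) 1 - {0})) (UNIV - {0}) =
       emeasure lborel (ball (0::vel) 1 - {0}) / emeasure lborel (ball (0::vel) 1 - {0})"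
  proof -
    have "emeasure (uniform_measure lborel (ball (0::vel) 1 - {0})) (UNIV - {0}) =
       emeasure lborel ((ball (0::vel) 1 - {0}) \<inter> (UNIV - {0})) / emeasure lborel (ball (0::vel) 1 - {0})"
      by (rule emeasure_uniform_measure) auto
    moreover have "(ball (0::vel) 1 - {0}) \<inter> (UNIV - {0}) = ball (0::vel) 1 - {0}" by auto
    ultimately show ?thesis by simp
  qed
  also have "\<dots> = 1"
  proof -
    have e: "emeasure lborel (ball (0::vel) 1 - {0}) = emeasure lborel (ball (0::vel) 1)"
      by (rule emeasure_Diff_null_set) auto
    have pos: "unit_ball_vol (real DIM(vel)) > 0" by (rule unit_ball_vol_pos) simp
    have eq: "emeasure lborel (ball (0::vel) 1) = ennreal (unit_ball_vol (real DIM(vel)))"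
      using emeasure_ball[of 1 "0::vel"] by (simp only: power_one mult_1_right)
    have "emeasure lborel (ball (0::vel) 1) \<noteq> 0" using pos unfolding eq by (simp only: ennreal_eq_0_iff not_le)
    moreover have "emeasure lborel (ball (0::vel) 1) \<noteq> \<infinity>" unfolding eq by simp
    ultimately show ?thesis unfolding e by (simp add: divide_eq_1_ennreal)
  qed
  finally show "emeasure sphere_measure (space sphere_measure) = 1" using sp by simp
qed

lemma sphere_fin: "finite_measure sphere_measure"
  by (rule finite_measureI) (simp add: sphere_one)

lemma sphere_measure_one: "measure sphere_measure (space sphere_measure) = 1"
  by (simp add: measure_def sphere_one)


lemma sphere_int_const: "integrable sphere_measure (\<lambda>x. c::real)"
  using finite_measure.integrable_const[OF sphere_fin] by blast

lemma normS_nonneg: "normS q \<ge> 0"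
  unfolding normS_def by (intro integral_nonneg_AE) auto

lemma L1S_shift:
  assumes "L1S q" "\<And>n. r n = q n + c"
  shows "L1S r" "(LINT n|sphere_measure. r n) = (LINT n|sphere_measure. q n) + c"
    "normS r \<le> normS q + \<bar>c\<bar>"
proof -
  have rr: "r = (\<lambda>n. q n + c)" using assms(2) by auto
  have qi: "integrable sphere_measure q" and qm: "q \<in> borel_measurable sphere_measure"
    using assms(1) by (auto simp: L1S_def)
  show "L1S r" unfolding L1S_def rr using qi qm sphere_int_const[of c] by auto
  show "(LINT n|sphere_measure. r n) = (LINT n|sphere_measure. q n) + c"
    unfolding rr using qi sphere_int_const[of c] by (simp add: sphere_measure_one)
  have i1: "integrable sphere_measure (\<lambda>n. \<bar>q n + c\<bar>)"
    by (rule integrable_abs, rule Bochner_Integration.integrable_add[OF qi sphere_int_const])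
  have i2: "integrable sphere_measure (\<lambda>n. \<bar>q n\<bar> + \<bar>c\<bar>)"
    by (rule Bochner_Integration.integrable_add[OF integrable_abs[OF qi] sphere_int_const])
  have "normS r \<le> (LINT n|sphere_measure. \<bar>q n\<bar> + \<bar>c\<bar>)"
    unfolding normS_def rr
    by (rule integral_mono[OF i1 i2]) (rule abs_triangle_ineq)
  also have "\<dots> = normS q + \<bar>c\<bar>"
    unfolding normS_def using qi sphere_int_const[of "\<bar>c\<bar>"] by (simp add: sphere_measure_one)
  finally show "normS r \<le> normS q + \<bar>c\<bar>" .
qed

lemma abs_int_le_normS: "L1S q \<Longrightarrow> \<bar>LINT n|sphere_measure. q n\<bar> \<le> normS q"
  unfolding normS_def L1S_def
  by (intro integral_abs_bound_integral) auto



definition gfun :: "real \<Rightarrow> real \<Rightarrow> real \<Rightarrow> real \<Rightarrow> real" where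
  "gfun a b q l = a - (a + b) / (1 + l) - q + l / (1 - l)"

lemma gfun_mono:
  assumes "0 < l" "l < l'" "l' < 1" "a + b \<ge> 0"
  shows "gfun a b q l < gfun a b q l'"
proof -
  have 1: "(a + b) / (1 + l') \<le> (a + b) / (1 + l)"
    using assms by (intro divide_left_mono) auto
  have 2: "l / (1 - l) < l' / (1 - l')"
    using assms by (simp add: divide_simps algebra_simps)
  show ?thesis unfolding gfun_def using 1 2 by linarith
qed

lemma gfun_unique:
  assumes "0 < l" "l < 1" "0 < l'" "l' < 1" "a + b \<ge> 0"
    "gfun a b q l = 0" "gfun a b q l' = 0"
  shows "l = l'"
  using gfun_mono[of l l' a b q] gfun_mono[of l' l a b q] assms
  by (metis less_irrefl linorder_neqE_linordered_idom)

lemma gfun_pert: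
  assumes "0 \<le> l" "l < 1"
  shows "\<bar>gfun a b q l - gfun m (lam0 * m) (lam0 / (1 - lam0)) l\<bar>
         \<le> \<bar>a - m\<bar> + \<bar>a + b - m * (1 + lam0)\<bar> + \<bar>q - lam0 / (1 - lam0)\<bar>"
proof -
  have eq: "gfun a b q l - gfun m (lam0 * m) (lam0 / (1 - lam0)) l
     = (a - m) - (a + b - m * (1 + lam0)) / (1 + l) - (q - lam0 / (1 - lam0))"
  proof -
    have d: "(a + b - m * (1 + lam0)) / (1 + l) = (a + b) / (1 + l) - (m + lam0 * m) / (1 + l)"
      by (simp add: diff_divide_distrib[symmetric] algebra_simps)
    show ?thesis unfolding gfun_def d by simp
  qed
  have "\<bar>(a + b - m * (1 + lam0)) / (1 + l)\<bar> \<le> \<bar>a + b - m * (1 + lam0)\<bar>"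
  proof -
    have "\<bar>a + b - m * (1 + lam0)\<bar> * 1 \<le> \<bar>a + b - m * (1 + lam0)\<bar> * (1 + l)"
      using assms by (intro mult_left_mono) auto
    then show ?thesis using assms by (simp add: abs_divide divide_le_eq)
  qed
  then show ?thesis unfolding eq by linarith
qed

lemma gfun_cont: "l1 > -1 \<Longrightarrow> l2 < 1 \<Longrightarrow> continuous_on {l1..l2} (gfun a b q)"
  unfolding gfun_def by (intro continuous_intros) auto

lemma root_exists:
  assumes "0 < lam0" "lam0 < 1" "m > 0" "0 < \<tau>" "\<tau> \<le> lam0 / 2" "\<tau> \<le> (1 - lam0) / 2"
    and small: "\<bar>a - m\<bar> + \<bar>a + b - m * (1 + lam0)\<bar> + \<bar>q - lam0 / (1 - lam0)\<bar> < m * \<tau> / 3"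
  shows "\<exists>l. \<bar>l - lam0\<bar> < \<tau> \<and> gfun a b q l = 0"
proof -
  define l1 where "l1 = lam0 - \<tau>"
  define l2 where "l2 = lam0 + \<tau>"
  define g0 where "g0 = gfun m (lam0 * m) (lam0 / (1 - lam0))"
  have l1: "0 < l1" "l1 < 1" and l2: "0 < l2" "l2 < 1" using assms by (auto simp: l1_def l2_def)
  have c1: "lam0 / (1 - lam0) \<le> l2 / (1 - l2)"
    using assms(1-6) l2 unfolding l2_def by (simp add: divide_simps algebra_simps)
  have c2: "l1 / (1 - l1) \<le> lam0 / (1 - lam0)"
    using assms(1-6) l1 unfolding l1_def by (simp add: divide_simps algebra_simps)
  have e2: "m - (m + lam0 * m) / (1 + l2) = m * \<tau> / (1 + l2)"
    using l2 by (simp add: l2_def field_simps)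
  have e1: "m - (m + lam0 * m) / (1 + l1) = - (m * \<tau> / (1 + l1))"
    using l1 by (simp add: l1_def field_simps)
  have b2: "m * \<tau> / (1 + l2) \<ge> m * \<tau> / 3"
    using l2 assms by (intro divide_left_mono) auto
  have b1: "m * \<tau> / (1 + l1) \<ge> m * \<tau> / 3"
    using l1 assms by (intro divide_left_mono) auto
  have g02: "g0 l2 \<ge> m * \<tau> / 3"
    using e2 b2 c1 unfolding g0_def gfun_def by linarith
  have g01: "g0 l1 \<le> - (m * \<tau> / 3)"
    using e1 b1 c2 unfolding g0_def gfun_def by linarith
  have p1: "\<bar>gfun a b q l1 - g0 l1\<bar> < m * \<tau> / 3"
    unfolding g0_def using gfun_pert[of l1 a b q m lam0] l1 small by linarith
  have p2: "\<bar>gfun a b q l2 - g0 l2\<bar> < m * \<tau> / 3"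
    unfolding g0_def using gfun_pert[of l2 a b q m lam0] l2 small by linarith
  have n1: "gfun a b q l1 < 0" using p1 g01 by linarith
  have n2: "gfun a b q l2 > 0" using p2 g02 by linarith
  have "\<exists>x. l1 \<le> x \<and> x \<le> l2 \<and> gfun a b q x = 0"
  proof (rule IVT')
    show "gfun a b q l1 \<le> 0" "0 \<le> gfun a b q l2" using n1 n2 by auto
    show "l1 \<le> l2" using assms(4) by (simp add: l1_def l2_def)
    show "continuous_on {l1..l2} (gfun a b q)" using l1 l2 by (intro gfun_cont) auto
  qed
  then obtain x where x: "l1 \<le> x" "x \<le> l2" "gfun a b q x = 0" by blast
  have "x \<noteq> l1" "x \<noteq> l2" using x n1 n2 by auto
  then have "\<bar>x - lam0\<bar> < \<tau>" using x by (auto simp: l1_def l2_def)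
  then show ?thesis using x by blast
qed



lemma aux_dFb:
  fixes x y f c l :: real
  assumes "1 + l \<noteq> 0"
  shows "(x + y) / (1 + l) - f = 1 / (1 + l) * (x - f) + 1 / (1 + l) * (y - c * f) + (c - l) / (1 + l) * f"
proof -
  define z where "z = 1 / (1 + l)"
  have hz: "(1 + l) * z = 1" using assms by (simp add: z_def)
  have "(x + y) / (1 + l) = (x + y) * z" "(c - l) / (1 + l) = (c - l) * z" by (simp_all add: z_def)
  moreover have "(x + y) * z - f = z * (x - f) + z * (y - c * f) + (c - l) * z * f"
    using hz by algebra
  ultimately show ?thesis by (simp add: z_def)
qed

lemma fin_arith1:
  fixes nA nT e1 e2 e3 TN S TK t D eps del :: real
  assumes "nA \<le> 2*e1 + e2 + TN" "nT \<le> e3 + S" "TK = 2*TN + S + t" "2*TK < D"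
    "e1+e2+e3 < eps" "8*eps \<le> D" "D \<le> del" "0\<le>e1" "0\<le>e2" "0\<le>e3" "0 < t"
  shows "nA + nA + nT < del"
  using assms by linarith
lemma fin_arith2:
  fixes nF nA nT e1 e2 e3 TN S TK t D eps eta l :: real
  assumes "nF \<le> e1 + e2 + TN" "nA \<le> 2*e1 + e2 + TN" "nT \<le> e3 + S" "TK = 2*TN + S + t" "2*TK < D"
    "e1+e2+e3 < eps" "8*eps \<le> D" "D \<le> eta" "0\<le>e1" "0\<le>e2" "0\<le>e3" "l < t"
  shows "nF + nA + nT + l < eta"
  using assms by linarith

lemma decomp_facts:
  assumes d: "is_decomp F1 F2 Q Fb lb \<alpha> \<theta>" and f1: "L12 F1" and f2: "L12 F2" and q: "L1S Q"
    and lb: "0 < lb" "lb < 1"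
  shows "gfun (LINT v|lborel. F1 v) (LINT v|lborel. F2 v) (LINT n|sphere_measure. Q n) lb = 0"
    "AE v in lborel. Fb v = (F1 v + F2 v) / (1 + lb)"
    "AE v in lborel. \<alpha> v = F1 v - (F1 v + F2 v) / (1 + lb)"
    "AE n in sphere_measure. \<theta> n = Q n - lb / (1 - lb)"
proof -
  have e1: "AE v in lborel. F1 v = Fb v + \<alpha> v" and e2: "AE v in lborel. F2 v = lb * Fb v - \<alpha> v"
    and e3: "AE n in sphere_measure. Q n = lb / (1 - lb) + \<theta> n"
    and ia: "(LINT v|lborel. \<alpha> v) = (LINT n|sphere_measure. \<theta> n)"
    and La: "L12 \<alpha>" and Lt: "L1S \<theta>"
    using d unfolding is_decomp_def by auto
  have lbp: "1 + lb > 0" "1 - lb > 0" using lb by auto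
  show A1: "AE v in lborel. Fb v = (F1 v + F2 v) / (1 + lb)"
    using e1 e2
  proof eventually_elim
    case (elim v)
    then show ?case using lbp by (simp add: field_simps)
  qed
  show A2: "AE v in lborel. \<alpha> v = F1 v - (F1 v + F2 v) / (1 + lb)"
    using e1 e2
  proof eventually_elim
    case (elim v)
    then show ?case using lbp by (simp add: field_simps)
  qed
  show A3: "AE n in sphere_measure. \<theta> n = Q n - lb / (1 - lb)"
    using e3 by eventually_elim simp
  note [measurable] = L12_meas[OF f1] L12_meas[OF f2] L12_meas[OF La]
  have qm[measurable]: "Q \<in> borel_measurable sphere_measure" "\<theta> \<in> borel_measurable sphere_measure"
    using q Lt by (auto simp: L1S_def)
  have "(LINT v|lborel. \<alpha> v) = (LINT v|lborel. F1 v - (F1 v + F2 v) / (1 + lb))"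
    by (rule integral_cong_AE) (use A2 in auto)
  also have "\<dots> = (LINT v|lborel. F1 v) - ((LINT v|lborel. F1 v) + (LINT v|lborel. F2 v)) / (1 + lb)"
    using L12_int[OF f1] L12_int[OF f2] by simp
  finally have ia1: "(LINT v|lborel. \<alpha> v) = (LINT v|lborel. F1 v) - ((LINT v|lborel. F1 v) + (LINT v|lborel. F2 v)) / (1 + lb)" .
  have "(LINT n|sphere_measure. \<theta> n) = (LINT n|sphere_measure. Q n - lb / (1 - lb))"
    by (rule integral_cong_AE) (use A3 in auto)
  also have "\<dots> = (LINT n|sphere_measure. Q n) + (- (lb / (1 - lb)))"
    by (rule L1S_shift(2)[OF q]) simp
  finally have ia2: "(LINT n|sphere_measure. \<theta> n) = (LINT n|sphere_measure. Q n) - lb / (1 - lb)" by simp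
  show "gfun (LINT v|lborel. F1 v) (LINT v|lborel. F2 v) (LINT n|sphere_measure. Q n) lb = 0"
    unfolding gfun_def using ia ia1 ia2 by linarith
qed

theorem lemma4p1:
  fixes F0 :: "real^3 \<Rightarrow> real" and lam0 \<delta> :: real
  assumes F0_L12: "L12 F0"
    and F0_nonneg: "AE v in lborel. F0 v \<ge> 0"
    and lam0_pos: "0 < lam0" "lam0 < 1"
    and mass: "(LINT v|lborel. F0 v) > 0"
    and delta: "\<delta> > 0"
  shows "\<exists>\<epsilon>>0. \<exists>\<eta>>0. \<forall>F1 F2 Q.
     inX F1 F2 Q \<and> posX F1 F2 Q \<and>
     normX (\<lambda>v. F1 v - F0 v) (\<lambda>v. F2 v - lam0 * F0 v) (\<lambda>n. Q n - lam0 / (1 - lam0)) < \<epsilon>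
     \<longrightarrow>
     (\<exists>Fb lb \<alpha> \<theta>. is_decomp F1 F2 Q Fb lb \<alpha> \<theta> \<and> 0 < lb \<and> lb < 1 \<and>
        normX \<alpha> (\<lambda>v. - \<alpha> v) \<theta> < \<delta> \<and>
        nbhd_dist F0 lam0 Fb lb \<alpha> \<theta> < \<eta> \<and>
        (AE v in lborel. Fb v > 0)) \<and>
     (\<forall>Fb lb \<alpha> \<theta> Fb' lb' \<alpha>' \<theta>'.
        is_decomp F1 F2 Q Fb lb \<alpha> \<theta> \<and> nbhd_dist F0 lam0 Fb lb \<alpha> \<theta> < \<eta> \<and>
        is_decomp F1 F2 Q Fb' lb' \<alpha>' \<theta>' \<and> nbhd_dist F0 lam0 Fb' lb' \<alpha>' \<theta>' < \<eta>
        \<longrightarrow> lb = lb' \<and> (AE v in lborel. Fb v = Fb' v) \<and> (AE v in lborel. \<alpha> v = \<alpha>' v)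
            \<and> (AE n in sphere_measure. \<theta> n = \<theta>' n))"
proof -
  define m where "m = (LINT v|lborel. F0 v)"
  define c0 where "c0 = lam0 / (1 - lam0)"
  define N0 where "N0 = normL12 F0"
  define \<eta> where "\<eta> = min lam0 (1 - lam0) / 2"
  define D where "D = min \<eta> \<delta>"
  define K where "K = 2 * N0 + 2 / (1 - lam0)^2 + 1"
  define \<tau> where "\<tau> = min \<eta> (D / (2 * K + 2))"
  define \<epsilon> where "\<epsilon> = min (m * \<tau> / 9) (D / 8)"
  have mpos: "m > 0" using mass by (simp add: m_def)
  have N0: "N0 \<ge> 0" by (simp add: N0_def normL12_nonneg)
  have etapos: "\<eta> > 0" using lam0_pos by (simp add: \<eta>_def)
  have Dpos: "D > 0" using etapos delta by (simp add: D_def)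
  have K1: "K \<ge> 1" using N0 by (simp add: K_def)
  have taupos: "\<tau> > 0" using etapos Dpos K1 by (simp add: \<tau>_def)
  have tau_eta: "\<tau> \<le> \<eta>" by (simp add: \<tau>_def)
  have tau_l: "\<tau> \<le> lam0 / 2" "\<tau> \<le> (1 - lam0) / 2" using tau_eta by (auto simp: \<eta>_def)
  have tauK: "\<tau> * K < D / 2"
  proof -
    have "\<tau> * K \<le> D / (2 * K + 2) * K" using K1 by (intro mult_right_mono) (auto simp: \<tau>_def)
    also have "\<dots> < D / 2" using K1 Dpos by (simp add: field_simps)
    finally show ?thesis .
  qed
  have epspos: "\<epsilon> > 0" using mpos taupos Dpos by (simp add: \<epsilon>_def)
  have eps1: "\<epsilon> \<le> m * \<tau> / 9" and eps2: "\<epsilon> \<le> D / 8" by (auto simp: \<epsilon>_def)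
  have D1: "D \<le> \<eta>" "D \<le> \<delta>" by (auto simp: D_def)
  have lam0_1: "1 - lam0 > 0" using lam0_pos by simp
  have F0m[measurable]: "F0 \<in> borel_measurable lborel" using F0_L12 by (rule L12_meas)
  show ?thesis
  proof (rule exI[of _ \<epsilon>], rule conjI[OF epspos], rule exI[of _ \<eta>], rule conjI[OF etapos],
      intro allI impI, rule conjI)
    fix F1 F2 Q
    assume H: "inX F1 F2 Q \<and> posX F1 F2 Q \<and>
     normX (\<lambda>v. F1 v - F0 v) (\<lambda>v. F2 v - lam0 * F0 v) (\<lambda>n. Q n - lam0 / (1 - lam0)) < \<epsilon>"
    have f1: "L12 F1" and f2: "L12 F2" and q: "L1S Q" using H by (auto simp: inX_def)
    have pos1: "AE v in lborel. F1 v > 0" and pos2: "AE v in lborel. F2 v > 0"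
      using H by (auto simp: posX_def)
    note [measurable] = L12_meas[OF f1] L12_meas[OF f2]
    have r1: "L12 (\<lambda>v. F1 v - F0 v)" by (rule L12_lin2(1)[OF f1 F0_L12, of _ 1 "-1"]) simp
    have r2: "L12 (\<lambda>v. F2 v - lam0 * F0 v)" by (rule L12_lin2(1)[OF f2 F0_L12, of _ 1 "-lam0"]) simp
    have r3: "L1S (\<lambda>n. Q n - c0)" by (rule L1S_shift(1)[OF q, of _ "-c0"]) simp
    define e1 where "e1 = normL12 (\<lambda>v. F1 v - F0 v)"
    define e2 where "e2 = normL12 (\<lambda>v. F2 v - lam0 * F0 v)"
    define e3 where "e3 = normS (\<lambda>n. Q n - c0)"
    have e_nn: "e1 \<ge> 0" "e2 \<ge> 0" "e3 \<ge> 0"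
      by (auto simp: e1_def e2_def e3_def normL12_nonneg normS_nonneg)
    have esum: "e1 + e2 + e3 < \<epsilon>" using H by (simp add: e1_def e2_def e3_def c0_def normX_def)
    define a where "a = (LINT v|lborel. F1 v)"
    define b where "b = (LINT v|lborel. F2 v)"
    define qq where "qq = (LINT n|sphere_measure. Q n)"
    have ia: "(LINT v|lborel. F1 v - F0 v) = a - m"
      using L12_int[OF f1] L12_int[OF F0_L12] by (simp add: a_def m_def)
    have ib: "(LINT v|lborel. F2 v - lam0 * F0 v) = b - lam0 * m"
      using L12_int[OF f2] L12_int[OF F0_L12] by (simp add: b_def m_def)
    have iq: "(LINT n|sphere_measure. Q n - c0) = qq - c0"
      using L1S_shift(2)[OF q, of "\<lambda>n. Q n - c0" "-c0"] by (simp add: qq_def)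
    have ba: "\<bar>a - m\<bar> \<le> e1" using abs_int_le_normL12[OF r1] ia by (simp add: e1_def)
    have bb': "\<bar>b - lam0 * m\<bar> \<le> e2" using abs_int_le_normL12[OF r2] ib by (simp add: e2_def)
    have bb: "\<bar>a + b - m * (1 + lam0)\<bar> \<le> e1 + e2" using ba bb' by (simp add: algebra_simps)
    have bq: "\<bar>qq - c0\<bar> \<le> e3" using abs_int_le_normS[OF r3] iq by (simp add: e3_def)
    have mt: "m * \<tau> > 0" using mpos taupos by simp
    have small: "\<bar>a - m\<bar> + \<bar>a + b - m * (1 + lam0)\<bar> + \<bar>qq - lam0 / (1 - lam0)\<bar> < m * \<tau> / 3"
      using ba bb bq esum eps1 e_nn mt unfolding c0_def by linarith
    have tau1: "\<tau> < 1" using tau_l lam0_pos by linarith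
    have "m * \<tau> < m * (1 + lam0)" using mpos tau1 lam0_pos by (intro mult_strict_left_mono) auto
    then have abpos: "a + b > 0" using bb esum eps1 e_nn mt by linarith
    show "(\<exists>Fb lb \<alpha> \<theta>. is_decomp F1 F2 Q Fb lb \<alpha> \<theta> \<and> 0 < lb \<and> lb < 1 \<and>
        normX \<alpha> (\<lambda>v. - \<alpha> v) \<theta> < \<delta> \<and>
        nbhd_dist F0 lam0 Fb lb \<alpha> \<theta> < \<eta> \<and>
        (AE v in lborel. Fb v > 0))"
    proof -
      obtain lb where lb: "\<bar>lb - lam0\<bar> < \<tau>" "gfun a b qq lb = 0"
        using root_exists[OF lam0_pos mpos taupos tau_l small] by blast
      have lb01: "0 < lb" "lb < 1" using lb tau_l by auto
      have lbp: "1 + lb > 0" "1 - lb > 0" using lb01 by auto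
      define Fb where "Fb = (\<lambda>v. (F1 v + F2 v) / (1 + lb))"
      define \<alpha> where "\<alpha> = (\<lambda>v. F1 v - Fb v)"
      define \<theta> where "\<theta> = (\<lambda>n. Q n - lb / (1 - lb))"
      have LFb: "L12 Fb" by (rule L12_lin2(1)[OF f1 f2, of _ "1 / (1 + lb)" "1 / (1 + lb)"])
          (simp add: Fb_def add_divide_distrib)
      have dFb: "\<And>v. Fb v - F0 v = 1 / (1 + lb) * (F1 v - F0 v) + 1 / (1 + lb) * (F2 v - lam0 * F0 v)
            + (lam0 - lb) / (1 + lb) * F0 v"
        using lbp unfolding Fb_def by (intro aux_dFb) simp
      have LFb0: "L12 (\<lambda>v. Fb v - F0 v)" by (rule L12_lin3(1)[OF r1 r2 F0_L12, OF dFb])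
      have nFb0: "normL12 (\<lambda>v. Fb v - F0 v) \<le> \<bar>1 / (1 + lb)\<bar> * e1 + \<bar>1 / (1 + lb)\<bar> * e2 + \<bar>(lam0 - lb) / (1 + lb)\<bar> * N0"
        unfolding e1_def e2_def N0_def by (rule L12_lin3(2)[OF r1 r2 F0_L12, OF dFb])
      have c1: "\<bar>1 / (1 + lb)\<bar> \<le> 1" using lbp lb01 by simp
      have c2: "\<bar>(lam0 - lb) / (1 + lb)\<bar> \<le> \<tau>"
      proof -
        have "\<bar>(lam0 - lb) / (1 + lb)\<bar> = \<bar>lam0 - lb\<bar> / (1 + lb)" using lbp by (simp add: abs_divide)
        also have "\<dots> \<le> \<bar>lam0 - lb\<bar> / 1" using lbp lb01 by (intro divide_left_mono) auto
        finally show ?thesis using lb(1) by simp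
      qed
      have nFb: "normL12 (\<lambda>v. Fb v - F0 v) \<le> e1 + e2 + \<tau> * N0"
      proof -
        have "\<bar>1 / (1 + lb)\<bar> * e1 \<le> e1" using c1 e_nn by (intro mult_left_le_one_le) auto
        moreover have "\<bar>1 / (1 + lb)\<bar> * e2 \<le> e2" using c1 e_nn by (intro mult_left_le_one_le) auto
        moreover have "\<bar>(lam0 - lb) / (1 + lb)\<bar> * N0 \<le> \<tau> * N0" using c2 N0 by (intro mult_right_mono) auto
        ultimately show ?thesis using nFb0 by linarith
      qed
      have dA: "\<And>v. \<alpha> v = 1 * (F1 v - F0 v) + (-1) * (Fb v - F0 v)" by (simp add: \<alpha>_def)
      have LA: "L12 \<alpha>" by (rule L12_lin2(1)[OF r1 LFb0 dA])
      have nA0: "normL12 \<alpha> \<le> \<bar>1\<bar> * e1 + \<bar>-1\<bar> * normL12 (\<lambda>v. Fb v - F0 v)"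
        unfolding e1_def by (rule L12_lin2(2)[OF r1 LFb0 dA])
      have nA: "normL12 \<alpha> \<le> 2 * e1 + e2 + \<tau> * N0" using nA0 nFb by simp
      have nmA: "normL12 (\<lambda>v. - \<alpha> v) = normL12 \<alpha>" by (simp add: normL12_def)
      have dT: "\<And>n. \<theta> n = (Q n - c0) + (c0 - lb / (1 - lb))" by (simp add: \<theta>_def)
      have LT: "L1S \<theta>" by (rule L1S_shift(1)[OF r3 dT])
      have nT0: "normS \<theta> \<le> e3 + \<bar>c0 - lb / (1 - lb)\<bar>"
        unfolding e3_def by (rule L1S_shift(3)[OF r3 dT])
      have cb: "\<bar>c0 - lb / (1 - lb)\<bar> \<le> 2 * \<tau> / (1 - lam0)^2"
      proof -
        have eq: "c0 - lb / (1 - lb) = (lam0 - lb) / ((1 - lam0) * (1 - lb))"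
          using lbp lam0_1 unfolding c0_def by (simp add: field_simps)
        have d: "(1 - lam0) * (1 - lb) \<ge> (1 - lam0)^2 / 2"
        proof -
          have "lb - lam0 < \<tau>" using lb(1) by (simp add: abs_less_iff)
          then have "1 - lb \<ge> (1 - lam0) / 2" using tau_l by argo
          then have "(1 - lam0) * (1 - lb) \<ge> (1 - lam0) * ((1 - lam0) / 2)"
            using lam0_1 by (intro mult_left_mono) auto
          then show ?thesis by (simp add: power2_eq_square)
        qed
        have dp: "(1 - lam0)^2 / 2 > 0" using lam0_1 by simp
        have "\<bar>c0 - lb / (1 - lb)\<bar> = \<bar>lam0 - lb\<bar> / ((1 - lam0) * (1 - lb))"
          unfolding eq using lbp lam0_1 by (simp add: abs_divide abs_mult)
        also have "\<dots> \<le> \<tau> / ((1 - lam0)^2 / 2)"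
          using lb(1) d dp taupos by (intro frac_le) auto
        also have "\<dots> = 2 * \<tau> / (1 - lam0)^2" by simp
        finally show ?thesis .
      qed
      have nT: "normS \<theta> \<le> e3 + 2 * \<tau> / (1 - lam0)^2" using nT0 cb by linarith
      have tK: "\<tau> * K = 2 * (\<tau> * N0) + 2 * \<tau> / (1 - lam0)^2 + \<tau>"
        by (simp add: K_def algebra_simps)
      have intA: "(LINT v|lborel. \<alpha> v) = a - (a + b) / (1 + lb)"
        using L12_int[OF f1] L12_int[OF f2] by (simp add: \<alpha>_def Fb_def a_def b_def)
      have intT: "(LINT n|sphere_measure. \<theta> n) = qq - lb / (1 - lb)"
        using L1S_shift(2)[OF q, of \<theta> "- (lb / (1 - lb))"] by (simp add: \<theta>_def qq_def)
      have dec: "is_decomp F1 F2 Q Fb lb \<alpha> \<theta>"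
        unfolding is_decomp_def
      proof (intro conjI LFb LA LT lb01 AE_I2)
        fix v show "F1 v = Fb v + \<alpha> v" by (simp add: \<alpha>_def)
      next
        fix v
        have h: "(1 + lb) * ((F1 v + F2 v) / (1 + lb)) = F1 v + F2 v" using lbp by simp
        then have "(F1 v + F2 v) / (1 + lb) + lb * ((F1 v + F2 v) / (1 + lb)) = F1 v + F2 v"
          by (simp only: distrib_right mult_1_left)
        then show "F2 v = lb * Fb v - \<alpha> v" unfolding \<alpha>_def Fb_def by linarith
      next
        fix n show "Q n = lb / (1 - lb) + \<theta> n" by (simp add: \<theta>_def)
      next
        show "(LINT v|lborel. \<alpha> v) = (LINT n|sphere_measure. \<theta> n)"
          using lb(2) intA intT unfolding gfun_def by linarith
      qed
      have Fbpos: "AE v in lborel. Fb v > 0"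
        using pos1 pos2
      proof eventually_elim
        case (elim v) then show ?case using lbp by (simp add: Fb_def)
      qed
      have tauK2: "2 * (\<tau> * K) < D" using tauK by argo
      have eps8: "8 * \<epsilon> \<le> D" using eps2 by argo
      have nX: "normX \<alpha> (\<lambda>v. - \<alpha> v) \<theta> < \<delta>"
        unfolding normX_def nmA
        by (rule fin_arith1[OF nA nT tK tauK2 esum eps8 D1(2) e_nn taupos])
      have nD: "nbhd_dist F0 lam0 Fb lb \<alpha> \<theta> < \<eta>"
        unfolding nbhd_dist_def
        by (rule fin_arith2[OF nFb nA nT tK tauK2 esum eps8 D1(1) e_nn lb(1)])
      show ?thesis using dec lb01 nX nD Fbpos by blast
    qed
    show "\<forall>Fb lb \<alpha> \<theta> Fb' lb' \<alpha>' \<theta>'.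
        is_decomp F1 F2 Q Fb lb \<alpha> \<theta> \<and> nbhd_dist F0 lam0 Fb lb \<alpha> \<theta> < \<eta> \<and>
        is_decomp F1 F2 Q Fb' lb' \<alpha>' \<theta>' \<and> nbhd_dist F0 lam0 Fb' lb' \<alpha>' \<theta>' < \<eta>
        \<longrightarrow> lb = lb' \<and> (AE v in lborel. Fb v = Fb' v) \<and> (AE v in lborel. \<alpha> v = \<alpha>' v)
            \<and> (AE n in sphere_measure. \<theta> n = \<theta>' n)"
    proof (intro allI impI)
      fix Fb lb \<alpha> \<theta> Fb' lb' \<alpha>' \<theta>'
      assume U: "is_decomp F1 F2 Q Fb lb \<alpha> \<theta> \<and> nbhd_dist F0 lam0 Fb lb \<alpha> \<theta> < \<eta> \<and>
        is_decomp F1 F2 Q Fb' lb' \<alpha>' \<theta>' \<and> nbhd_dist F0 lam0 Fb' lb' \<alpha>' \<theta>' < \<eta>"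
      have lbd: "\<bar>lb - lam0\<bar> < \<eta>" "\<bar>lb' - lam0\<bar> < \<eta>"
        using U normL12_nonneg[of "\<lambda>v. Fb v - F0 v"] normL12_nonneg[of \<alpha>] normS_nonneg[of \<theta>]
          normL12_nonneg[of "\<lambda>v. Fb' v - F0 v"] normL12_nonneg[of \<alpha>'] normS_nonneg[of \<theta>']
        unfolding nbhd_dist_def by linarith+
      have et: "2 * \<eta> \<le> lam0" "2 * \<eta> \<le> 1 - lam0" by (auto simp: \<eta>_def)
      have lbd2: "lb - lam0 < \<eta>" "lam0 - lb < \<eta>" "lb' - lam0 < \<eta>" "lam0 - lb' < \<eta>"
        using lbd by (simp_all add: abs_less_iff)
      have l01: "0 < lb" "lb < 1" "0 < lb'" "lb' < 1" using lbd2 et etapos by argo+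
      have D1: "is_decomp F1 F2 Q Fb lb \<alpha> \<theta>" and D2: "is_decomp F1 F2 Q Fb' lb' \<alpha>' \<theta>'" using U by auto
      note X1 = decomp_facts[OF D1 f1 f2 q l01(1,2)]
      note X2 = decomp_facts[OF D2 f1 f2 q l01(3,4)]
      have eq: "lb = lb'"
        by (rule gfun_unique[OF l01 _ X1(1) X2(1)]) (use abpos in \<open>simp add: a_def b_def\<close>)
      have "AE v in lborel. Fb v = Fb' v" using X1(2) X2(2) unfolding eq by eventually_elim simp
      moreover have "AE v in lborel. \<alpha> v = \<alpha>' v" using X1(3) X2(3) unfolding eq by eventually_elim simp
      moreover have "AE n in sphere_measure. \<theta> n = \<theta>' n" using X1(4) X2(4) unfolding eq by eventually_elim simp
      ultimately show "lb = lb' \<and> (AE v in lborel. Fb v = Fb' v) \<and> (AE v in lborel. \<alpha> v = \<alpha>' v)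
            \<and> (AE n in sphere_measure. \<theta> n = \<theta>' n)" using eq by blast
    qed
  qed
qed


end
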